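(* There exists a (weighted) instance of the atomic two-stage facility location game that admits no subgame perfect equilibrium.
   Context: Atomic two-stage facility location game. An instance is a triple $(H,U,k)$: $H=(V,E,w)$ is a finite directed graph with vertex weights $w:V\to\mathbb{Q}_{>0}$; $F$ is a set of $k$ facility agents; $U:F\to 2^V$ assigns to each facility agent $f$ a set $U(f)\subseteq V$ of feasible locations. The vertices are simultaneously the clients and the possible locations. A facility placement profile (FPP) is a vector $\mathbf{s}=(s_f)_{f\in F}$ with $s_f\in U(f)$ (several facilities may choose the same vertex); $S$ denotes the set of all FPPs. For a client $v$ let $N(v)=\{v\}\cup\{u:(v,u)\in E\}$ and $N_{\mathbf{s}}(v)=\{f\in F: s_f\in N(v)\}$. A client profile for $\mathbf{s}$ is $\sigma(\mathbf{s})$, assigning to each client $v$ numbers $\sigma(\mathbf{s})_{v,f}\in[0,1]$ ($f\in F$) with $\sigma(\mathbf{s})_{v,f}=0$ for $f\notin N_{\mathbf{s}}(v)$ and $\sum_{f\in N_{\mathbf{s}}(v)}\sigma(\mathbf{s})_{v,f}=1$ whenever $N_{\mathbf{s}}(v)\neq\varnothing$. A full client profile $\sigma$ specifies a client profile $\sigma(\mathbf{s}')$ for every $\mathbf{s}'\in S$. The load of facility $f$ is $\ell_f(\mathbf{s},\sigma)=\sum_{v\in V}\sigma(\mathbf{s})_{v,f}w(v)$. The cost of client $v$ is $L_v(\mathbf{s},\sigma)=w(v)+\sum_{f\in N_{\mathbf{s}}(v)}\sigma(\mathbf{s})_{v,f}\,\ell_{-v,f}(\mathbf{s},\sigma)$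 where $\ell_{-v,f}(\mathbf{s},\sigma)=\sum_{u\neq v}\sigma(\mathbf{s})_{u,f}w(u)$. $\sigma(\mathbf{s})$ is a client equilibrium if no client $v$ can strictly decrease $L_v$ by unilaterally changing her own distribution to another feasible one; $\sigma$ is a full client equilibrium if $\sigma(\mathbf{s}')$ is a client equilibrium for every $\mathbf{s}'\in S$. A pair $(\mathbf{s},\sigma)$ is a subgame perfect equilibrium (SPE) if $\sigma$ is a full client equilibrium and there is no facility $f$ and location $s'_f\in U(f)$ with $\ell_f((s'_f,\mathbf{s}_{-f}),\sigma)>\ell_f(\mathbf{s},\sigma)$. *)

theory Defs
  imports Complex_Main "HOL-Library.FuncSet"
begin

(* Vertices (clients = locations) and facility agents are both encoded as natural numbers.
   An instance: V finite vertex set, E \<subseteq> V \<times> V directed edges, w vertex weights (rational),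
   F finite set of facility agents (k = card F), U f \<subseteq> V feasible locations of f. *)

definition fl_instance ::
  "nat set \<Rightarrow> (nat \<times> nat) set \<Rightarrow> (nat \<Rightarrow> rat) \<Rightarrow> nat set \<Rightarrow> (nat \<Rightarrow> nat set) \<Rightarrow> bool" where
  "fl_instance V E w F U \<longleftrightarrow> finite V \<and> E \<subseteq> V \<times> V \<and> (\<forall>v\<in>V. w v > 0) \<and>
     finite F \<and> (\<forall>f\<in>F. U f \<subseteq> V \<and> U f \<noteq> {})"

definition FPPs :: "nat set \<Rightarrow> (nat \<Rightarrow> nat set) \<Rightarrow> (nat \<Rightarrow> nat) set" where
  "FPPs F U = (\<Pi>\<^sub>E f\<in>F. U f)"

definition nbh :: "(nat \<times> nat) set \<Rightarrow> nat \<Rightarrow> nat set" where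
  "nbh E v = {v} \<union> {u. (v, u) \<in> E}"

definition nbh_s :: "(nat \<times> nat) set \<Rightarrow> nat set \<Rightarrow> (nat \<Rightarrow> nat) \<Rightarrow> nat \<Rightarrow> nat set" where
  "nbh_s E F s v = {f\<in>F. s f \<in> nbh E v}"

definition feasible_dist ::
  "(nat \<times> nat) set \<Rightarrow> nat set \<Rightarrow> (nat \<Rightarrow> nat) \<Rightarrow> nat \<Rightarrow> (nat \<Rightarrow> real) \<Rightarrow> bool" where
  "feasible_dist E F s v d \<longleftrightarrow>
     (\<forall>f\<in>F. 0 \<le> d f \<and> d f \<le> 1) \<and>
     (\<forall>f\<in>F. f \<notin> nbh_s E F s v \<longrightarrow> d f = 0) \<and>
     (nbh_s E F s v \<noteq> {} \<longrightarrow> (\<Sum>f\<in>nbh_s E F s v. d f) = 1)"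

definition client_profile ::
  "nat set \<Rightarrow> (nat \<times> nat) set \<Rightarrow> nat set \<Rightarrow> (nat \<Rightarrow> nat) \<Rightarrow> (nat \<Rightarrow> nat \<Rightarrow> real) \<Rightarrow> bool" where
  "client_profile V E F s p \<longleftrightarrow> (\<forall>v\<in>V. feasible_dist E F s v (p v))"

definition load :: "nat set \<Rightarrow> (nat \<Rightarrow> rat) \<Rightarrow> (nat \<Rightarrow> nat \<Rightarrow> real) \<Rightarrow> nat \<Rightarrow> real" where
  "load V w p f = (\<Sum>v\<in>V. p v f * of_rat (w v))"

definition load_minus ::
  "nat set \<Rightarrow> (nat \<Rightarrow> rat) \<Rightarrow> (nat \<Rightarrow> nat \<Rightarrow> real) \<Rightarrow> nat \<Rightarrow> nat \<Rightarrow> real" where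
  "load_minus V w p v f = (\<Sum>u\<in>V - {v}. p u f * of_rat (w u))"

definition client_cost ::
  "nat set \<Rightarrow> (nat \<times> nat) set \<Rightarrow> (nat \<Rightarrow> rat) \<Rightarrow> nat set \<Rightarrow> (nat \<Rightarrow> nat)
     \<Rightarrow> (nat \<Rightarrow> nat \<Rightarrow> real) \<Rightarrow> nat \<Rightarrow> real" where
  "client_cost V E w F s p v =
     of_rat (w v) + (\<Sum>f\<in>nbh_s E F s v. p v f * load_minus V w p v f)"

definition client_equilibrium ::
  "nat set \<Rightarrow> (nat \<times> nat) set \<Rightarrow> (nat \<Rightarrow> rat) \<Rightarrow> nat set \<Rightarrow> (nat \<Rightarrow> nat)
     \<Rightarrow> (nat \<Rightarrow> nat \<Rightarrow> real) \<Rightarrow> bool" where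
  "client_equilibrium V E w F s p \<longleftrightarrow> client_profile V E F s p \<and>
     (\<forall>v\<in>V. \<forall>d. feasible_dist E F s v d \<longrightarrow>
        client_cost V E w F s p v \<le> client_cost V E w F s (p(v := d)) v)"

definition full_client_equilibrium ::
  "nat set \<Rightarrow> (nat \<times> nat) set \<Rightarrow> (nat \<Rightarrow> rat) \<Rightarrow> nat set \<Rightarrow> (nat \<Rightarrow> nat set)
     \<Rightarrow> ((nat \<Rightarrow> nat) \<Rightarrow> nat \<Rightarrow> nat \<Rightarrow> real) \<Rightarrow> bool" where
  "full_client_equilibrium V E w F U \<sigma> \<longleftrightarrow>
     (\<forall>s\<in>FPPs F U. client_equilibrium V E w F s (\<sigma> s))"

definition is_SPE ::
  "nat set \<Rightarrow> (nat \<times> nat) set \<Rightarrow> (nat \<Rightarrow> rat) \<Rightarrow> nat set \<Rightarrow> (nat \<Rightarrow> nat set)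
     \<Rightarrow> (nat \<Rightarrow> nat) \<Rightarrow> ((nat \<Rightarrow> nat) \<Rightarrow> nat \<Rightarrow> nat \<Rightarrow> real) \<Rightarrow> bool" where
  "is_SPE V E w F U s \<sigma> \<longleftrightarrow> s \<in> FPPs F U \<and> full_client_equilibrium V E w F U \<sigma> \<and>
     (\<forall>f\<in>F. \<forall>x\<in>U f. load V w (\<sigma> (s(f := x))) f \<le> load V w (\<sigma> s) f)"

end

theory Submission
  imports Defs
begin

definition V0 :: "nat set" where "V0 = {0,1,2,3}"
definition E0 :: "(nat \<times> nat) set" where "E0 = {(1,2),(1,3)}"
definition w0 :: "nat \<Rightarrow> rat" where
  "w0 v = (if v = 0 then 4 else if v = 1 then 5 else if v = 2 then 1 else 2)"
definition F0 :: "nat set" where "F0 = {0,1}"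
definition U0 :: "nat \<Rightarrow> nat set" where "U0 f = (if f = 0 then {0,2} else {1,3})"

lemma nbh_E0: "nbh E0 v = (if v = 1 then {1,2,3} else {v})"
  unfolding nbh_def E0_def by auto

lemma nbhs_F0: "nbh_s E F0 s v =
  (if s 0 \<in> nbh E v then {0} else {}) \<union> (if s 1 \<in> nbh E v then {1} else {})"
proof (rule set_eqI)
  fix x show "x \<in> nbh_s E F0 s v \<longleftrightarrow> x \<in> (if s 0 \<in> nbh E v then {0} else {}) \<union> (if s 1 \<in> nbh E v then {1} else {})"
    unfolding nbh_s_def F0_def by (cases "x = 0"; cases "x = 1") auto
qed

lemma F0_mem[simp]: "0 \<in> F0" "1 \<in> F0" unfolding F0_def by auto

lemma ce_zero:
  assumes "client_equilibrium V E w F s p" "v \<in> V" "f \<in> F" "f \<notin> nbh_s E F s v"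
  shows "p v f = 0"
  using assms unfolding client_equilibrium_def client_profile_def feasible_dist_def by blast

lemma ce_single:
  assumes "client_equilibrium V E w F s p" "v \<in> V" "nbh_s E F s v = {f}"
  shows "p v f = 1"
  using assms unfolding client_equilibrium_def client_profile_def feasible_dist_def by auto

lemma ce_both:
  assumes "client_equilibrium V E w F0 s p" "v \<in> V" "nbh_s E F0 s v = {0,1}"
  shows "p v 0 + p v 1 = 1"
  using assms unfolding client_equilibrium_def client_profile_def feasible_dist_def by auto

lemma ce_dev:
  assumes ce: "client_equilibrium V E w F s p" and v: "v \<in> V"
    and g: "g \<in> nbh_s E F s v" and fin: "finite (nbh_s E F s v)"
  shows "(\<Sum>f\<in>nbh_s E F s v. p v f * load_minus V w p v f) \<le> load_minus V w p v g"
proof -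
  define d where "d = (\<lambda>f. if f = g then (1::real) else 0)"
  have gF: "g \<in> F" using g unfolding nbh_s_def by auto
  have sumd: "(\<Sum>f\<in>nbh_s E F s v. d f) = 1"
    using g fin unfolding d_def by (simp add: sum.delta)
  have feas: "feasible_dist E F s v d"
    unfolding feasible_dist_def using sumd g unfolding d_def by auto
  have lm: "load_minus V w (p(v := d)) v f = load_minus V w p v f" for f
    unfolding load_minus_def by (rule sum.cong) auto
  have "client_cost V E w F s p v \<le> client_cost V E w F s (p(v := d)) v"
    using ce v feas unfolding client_equilibrium_def by blast
  also have "client_cost V E w F s (p(v := d)) v = of_rat (w v) + load_minus V w p v g"
    unfolding client_cost_def using g fin by (simp only: lm) (simp add: d_def if_distrib[where f="\<lambda>x. x * _"] sum.delta cong: if_cong)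
  finally show ?thesis unfolding client_cost_def by simp
qed

lemma load_V0: "load V0 w0 p f = p 0 f * 4 + p 1 f * 5 + p 2 f + p 3 f * 2"
  unfolding load_def V0_def w0_def by simp

lemma lm_V0_1: "load_minus V0 w0 p 1 f = p 0 f * 4 + p 2 f + p 3 f * 2"
proof -
  have "V0 - {1} = {0,2,3}" unfolding V0_def by auto
  then show ?thesis unfolding load_minus_def w0_def by simp
qed

lemmas nb = nbhs_F0 nbh_E0

lemma prof03:
  assumes ce: "client_equilibrium V0 E0 w0 F0 s p" and "s 0 = 0" "s 1 = 3"
  shows "load V0 w0 p 0 = 4" "load V0 w0 p 1 = 7"
proof -
  have "p 0 0 = 1" by (rule ce_single[OF ce]) (auto simp del: One_nat_def simp add: V0_def nb assms)
  moreover have "p 1 1 = 1" by (rule ce_single[OF ce]) (auto simp del: One_nat_def simp add: V0_def nb assms)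
  moreover have "p 3 1 = 1" by (rule ce_single[OF ce]) (auto simp del: One_nat_def simp add: V0_def nb assms)
  moreover have "p 1 0 = 0" by (rule ce_zero[OF ce]) (auto simp del: One_nat_def simp add: V0_def nb assms)
  moreover have "p 2 0 = 0" by (rule ce_zero[OF ce]) (auto simp del: One_nat_def simp add: V0_def nb assms)
  moreover have "p 3 0 = 0" by (rule ce_zero[OF ce]) (auto simp del: One_nat_def simp add: V0_def nb assms)
  moreover have "p 0 1 = 0" by (rule ce_zero[OF ce]) (auto simp del: One_nat_def simp add: V0_def nb assms)
  moreover have "p 2 1 = 0" by (rule ce_zero[OF ce]) (auto simp del: One_nat_def simp add: V0_def nb assms)
  ultimately show "load V0 w0 p 0 = 4" "load V0 w0 p 1 = 7" by (simp_all add: load_V0)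
qed

lemma prof01:
  assumes ce: "client_equilibrium V0 E0 w0 F0 s p" and "s 0 = 0" "s 1 = 1"
  shows "load V0 w0 p 0 = 4" "load V0 w0 p 1 = 5"
proof -
  have "p 0 0 = 1" by (rule ce_single[OF ce]) (auto simp del: One_nat_def simp add: V0_def nb assms)
  moreover have "p 1 1 = 1" by (rule ce_single[OF ce]) (auto simp del: One_nat_def simp add: V0_def nb assms)
  moreover have "p 3 1 = 0" by (rule ce_zero[OF ce]) (auto simp del: One_nat_def simp add: V0_def nb assms)
  moreover have "p 1 0 = 0" by (rule ce_zero[OF ce]) (auto simp del: One_nat_def simp add: V0_def nb assms)
  moreover have "p 2 0 = 0" by (rule ce_zero[OF ce]) (auto simp del: One_nat_def simp add: V0_def nb assms)
  moreover have "p 3 0 = 0" by (rule ce_zero[OF ce]) (auto simp del: One_nat_def simp add: V0_def nb assms)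
  moreover have "p 0 1 = 0" by (rule ce_zero[OF ce]) (auto simp del: One_nat_def simp add: V0_def nb assms)
  moreover have "p 2 1 = 0" by (rule ce_zero[OF ce]) (auto simp del: One_nat_def simp add: V0_def nb assms)
  ultimately show "load V0 w0 p 0 = 4" "load V0 w0 p 1 = 5" by (simp_all add: load_V0)
qed

lemma prof23:
  assumes ce: "client_equilibrium V0 E0 w0 F0 s p" and "s 0 = 2" "s 1 = 3"
  shows "load V0 w0 p 0 = 6" "load V0 w0 p 1 = 2"
proof -
  have a: "p 2 0 = 1" by (rule ce_single[OF ce]) (auto simp del: One_nat_def simp add: V0_def nb assms)
  have b: "p 3 1 = 1" by (rule ce_single[OF ce]) (auto simp del: One_nat_def simp add: V0_def nb assms)
  have c: "p 2 1 = 0" by (rule ce_zero[OF ce]) (auto simp del: One_nat_def simp add: V0_def nb assms)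
  have d: "p 3 0 = 0" by (rule ce_zero[OF ce]) (auto simp del: One_nat_def simp add: V0_def nb assms)
  have e: "p 0 0 = 0" by (rule ce_zero[OF ce]) (auto simp del: One_nat_def simp add: V0_def nb assms)
  have f: "p 0 1 = 0" by (rule ce_zero[OF ce]) (auto simp del: One_nat_def simp add: V0_def nb assms)
  have N1: "nbh_s E0 F0 s 1 = {0,1}" by (auto simp del: One_nat_def simp add: nb assms)
  have sum1: "p 1 0 + p 1 1 = 1" by (rule ce_both[OF ce _ N1]) (simp add: V0_def)
  have dev: "(\<Sum>f\<in>nbh_s E0 F0 s 1. p 1 f * load_minus V0 w0 p 1 f) \<le> load_minus V0 w0 p 1 0"
    by (rule ce_dev[OF ce]) (auto simp del: One_nat_def simp add: V0_def N1)
  then have "p 1 0 * 1 + p 1 1 * 2 \<le> 1"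
    by (simp del: One_nat_def add: N1 lm_V0_1 a b c d e f)
  then have "p 1 1 = 0" "p 1 0 = 1" using sum1 ce unfolding client_equilibrium_def
      client_profile_def feasible_dist_def F0_def V0_def by auto
  then show "load V0 w0 p 0 = 6" "load V0 w0 p 1 = 2" by (simp_all del: One_nat_def add: load_V0 a b c d e f)
qed

lemma prof21:
  assumes ce: "client_equilibrium V0 E0 w0 F0 s p" and "s 0 = 2" "s 1 = 1"
  shows "load V0 w0 p 0 = 1" "load V0 w0 p 1 = 5"
proof -
  have a: "p 2 0 = 1" by (rule ce_single[OF ce]) (auto simp del: One_nat_def simp add: V0_def nb assms)
  have b: "p 3 1 = 0" by (rule ce_zero[OF ce]) (auto simp del: One_nat_def simp add: V0_def nb assms)
  have c: "p 2 1 = 0" by (rule ce_zero[OF ce]) (auto simp del: One_nat_def simp add: V0_def nb assms)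
  have d: "p 3 0 = 0" by (rule ce_zero[OF ce]) (auto simp del: One_nat_def simp add: V0_def nb assms)
  have e: "p 0 0 = 0" by (rule ce_zero[OF ce]) (auto simp del: One_nat_def simp add: V0_def nb assms)
  have f: "p 0 1 = 0" by (rule ce_zero[OF ce]) (auto simp del: One_nat_def simp add: V0_def nb assms)
  have N1: "nbh_s E0 F0 s 1 = {0,1}" by (auto simp del: One_nat_def simp add: nb assms)
  have sum1: "p 1 0 + p 1 1 = 1" by (rule ce_both[OF ce _ N1]) (simp add: V0_def)
  have dev: "(\<Sum>f\<in>nbh_s E0 F0 s 1. p 1 f * load_minus V0 w0 p 1 f) \<le> load_minus V0 w0 p 1 1"
    by (rule ce_dev[OF ce]) (auto simp del: One_nat_def simp add: V0_def N1)
  then have "p 1 0 * 1 \<le> 0"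
    by (simp del: One_nat_def add: N1 lm_V0_1 a b c d e f)
  then have "p 1 1 = 1" "p 1 0 = 0" using sum1 ce unfolding client_equilibrium_def
      client_profile_def feasible_dist_def F0_def V0_def by auto
  then show "load V0 w0 p 0 = 1" "load V0 w0 p 1 = 5" by (simp_all del: One_nat_def add: load_V0 a b c d e f)
qed

lemma inst: "fl_instance V0 E0 w0 F0 U0"
  unfolding fl_instance_def V0_def E0_def w0_def F0_def U0_def by auto

lemma upd_FPP: "s \<in> FPPs F0 U0 \<Longrightarrow> f \<in> F0 \<Longrightarrow> x \<in> U0 f \<Longrightarrow> s(f := x) \<in> FPPs F0 U0"
  unfolding FPPs_def by (auto simp: PiE_def Pi_def extensional_def)

lemma noSPE: "\<not> is_SPE V0 E0 w0 F0 U0 s \<sigma>"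
proof
  assume H: "is_SPE V0 E0 w0 F0 U0 s \<sigma>"
  then have sF: "s \<in> FPPs F0 U0" and fce: "full_client_equilibrium V0 E0 w0 F0 U0 \<sigma>"
    and nd: "\<And>f x. f \<in> F0 \<Longrightarrow> x \<in> U0 f \<Longrightarrow>
       load V0 w0 (\<sigma> (s(f := x))) f \<le> load V0 w0 (\<sigma> s) f"
    unfolding is_SPE_def by auto
  have CE: "\<And>t. t \<in> FPPs F0 U0 \<Longrightarrow> client_equilibrium V0 E0 w0 F0 t (\<sigma> t)"
    using fce unfolding full_client_equilibrium_def by auto
  have s0: "s 0 = 0 \<or> s 0 = 2" and s1: "s 1 = 1 \<or> s 1 = 3"
    using sF unfolding FPPs_def U0_def F0_def by (auto simp: PiE_def Pi_def)
  have ce_s: "client_equilibrium V0 E0 w0 F0 s (\<sigma> s)" using CE sF .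
  have ce_u: "\<And>f x. f \<in> F0 \<Longrightarrow> x \<in> U0 f \<Longrightarrow> client_equilibrium V0 E0 w0 F0 (s(f:=x)) (\<sigma> (s(f:=x)))"
    using CE upd_FPP sF by blast
  have F0a: "0 \<in> F0" "1 \<in> F0" unfolding F0_def by auto
  have U0a: "2 \<in> U0 0" "0 \<in> U0 0" "1 \<in> U0 1" "3 \<in> U0 1" unfolding U0_def by auto
  from s0 s1 show False
  proof (elim disjE)
    assume a: "s 0 = 0" "s 1 = 1"
    have "load V0 w0 (\<sigma> (s(1:=3))) 1 = 7"
      by (rule prof03(2)[OF ce_u[OF F0a(2) U0a(4)]]) (simp_all del: One_nat_def add: a)
    moreover have "load V0 w0 (\<sigma> s) 1 = 5" by (rule prof01(2)[OF ce_s a])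
    ultimately show False using nd[OF F0a(2) U0a(4)] by simp
  next
    assume a: "s 0 = 0" "s 1 = 3"
    have "load V0 w0 (\<sigma> (s(0:=2))) 0 = 6"
      by (rule prof23(1)[OF ce_u[OF F0a(1) U0a(1)]]) (simp_all del: One_nat_def add: a)
    moreover have "load V0 w0 (\<sigma> s) 0 = 4" by (rule prof03(1)[OF ce_s a])
    ultimately show False using nd[OF F0a(1) U0a(1)] by simp
  next
    assume a: "s 0 = 2" "s 1 = 1"
    have "load V0 w0 (\<sigma> (s(0:=0))) 0 = 4"
      by (rule prof01(1)[OF ce_u[OF F0a(1) U0a(2)]]) (simp_all del: One_nat_def add: a)
    moreover have "load V0 w0 (\<sigma> s) 0 = 1" by (rule prof21(1)[OF ce_s a])
    ultimately show False using nd[OF F0a(1) U0a(2)] by simp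
  next
    assume a: "s 0 = 2" "s 1 = 3"
    have "load V0 w0 (\<sigma> (s(1:=1))) 1 = 5"
      by (rule prof21(2)[OF ce_u[OF F0a(2) U0a(3)]]) (simp_all del: One_nat_def add: a)
    moreover have "load V0 w0 (\<sigma> s) 1 = 2" by (rule prof23(2)[OF ce_s a])
    ultimately show False using nd[OF F0a(2) U0a(3)] by simp
  qed
qed

theorem mainTheorem2:
  shows "\<exists>V E w F U. fl_instance V E w F U \<and> \<not> (\<exists>s \<sigma>. is_SPE V E w F U s \<sigma>)"
  using inst noSPE by blast

end
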